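(* The tree patterns $(21435,\text{-}1\text{-}\text{-})$ and $(13254,1\text{-}1\text{-})$ are Wilf-equivalent; that is, for all choices of values in $\{0,1\}$ at the positions marked "-", and all $n\ge0$, $|\mathcal{T}_n(21435,x1yz)|=|\mathcal{T}_n(13254,1u1v)|$.
   Context: $\mathcal{T}_n$ is the set of binary trees on $n$ vertices labeled $1,\dots,n$ by the search tree property. $c_L,c_R,p$: left child, right child, parent. A tree pattern is $(P,e)$, $P\in\mathcal{T}_k$, $e\colon[k]\setminus\{\text{root}\}\to\{0,1\}$ ($e(i)=1$: edge to the parent contiguous; $0$: non-contiguous). $T\in\mathcal{T}_n$ contains $(P,e)$ if there is an injection $f\colon[k]\to[n]$ such that for every non-root $i$ of $P$: if $e(i)=1$, $f(i)$ is the left (resp. right) child of $f(p(i))$ when $i$ is the left (resp. right) child of $p(i)$; if $e(i)=0$, $f(i)$ lies in the left (resp. right) subtree of $f(p(i))$. $\mathcal{T}_n(P,e)$ is the set of avoiders. Compact notation: $(\tau_1\cdots\tau_k,\,x_2\cdots x_k)$ denotes the pattern whose preorder vertex sequence (root, then left subtree recursively, then right subtree recursively) is $\tau_1,\dots,\tau_k$ and with $e(\tau_j)=x_j$. A hyphen "-" in the second component is a placeholder whose value (0 or 1) does not affect the set of avoiding trees. *)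

theory Defs
  imports Main "HOL-Library.Tree"
begin

text \<open>Binary trees on vertices 1..n labeled by the search tree property:
  the in-order reading of the labels is 1,2,...,n.\<close>
definition trees :: "nat \<Rightarrow> nat tree set" where
  "trees n = {t. inorder t = [1..<n+1]}"

definition is_left_child :: "nat tree \<Rightarrow> nat \<Rightarrow> nat \<Rightarrow> bool" where
  "is_left_child t i j \<longleftrightarrow> (\<exists>l' r' r. Node (Node l' i r') j r \<in> subtrees t)"

definition is_right_child :: "nat tree \<Rightarrow> nat \<Rightarrow> nat \<Rightarrow> bool" where
  "is_right_child t i j \<longleftrightarrow> (\<exists>l l' r'. Node l j (Node l' i r') \<in> subtrees t)"

definition in_left_subtree :: "nat tree \<Rightarrow> nat \<Rightarrow> nat \<Rightarrow> bool" where
  "in_left_subtree t i j \<longleftrightarrow> (\<exists>l r. Node l j r \<in> subtrees t \<and> i \<in> set_tree l)"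

definition in_right_subtree :: "nat tree \<Rightarrow> nat \<Rightarrow> nat \<Rightarrow> bool" where
  "in_right_subtree t i j \<longleftrightarrow> (\<exists>l r. Node l j r \<in> subtrees t \<and> i \<in> set_tree r)"

text \<open>T contains the tree pattern (P,e); e i = True means the edge from i to its
  parent is contiguous (value 1). The value of e at the root is never used.\<close>
definition contains :: "nat tree \<Rightarrow> nat tree \<Rightarrow> (nat \<Rightarrow> bool) \<Rightarrow> bool" where
  "contains T P e \<longleftrightarrow> (\<exists>f. inj_on f (set_tree P) \<and> f ` set_tree P \<subseteq> set_tree T \<and>
     (\<forall>i j. is_left_child P i j \<longrightarrow>
        (if e i then is_left_child T (f i) (f j) else in_left_subtree T (f i) (f j))) \<and>
     (\<forall>i j. is_right_child P i j \<longrightarrow>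
        (if e i then is_right_child T (f i) (f j) else in_right_subtree T (f i) (f j))))"

definition avoiders :: "nat \<Rightarrow> nat tree \<Rightarrow> (nat \<Rightarrow> bool) \<Rightarrow> nat tree set" where
  "avoiders n P e = {T \<in> trees n. \<not> contains T P e}"

text \<open>Pattern 21435 (preorder 2,1,4,3,5): root 2, left child 1, right child 4
  with children 3 and 5. Edge labels -1-- : e(1)=x, e(4)=1, e(3)=y, e(5)=z.\<close>
definition P21435 :: "nat tree" where
  "P21435 = Node (Node Leaf 1 Leaf) 2 (Node (Node Leaf 3 Leaf) 4 (Node Leaf 5 Leaf))"

definition e21435 :: "bool \<Rightarrow> bool \<Rightarrow> bool \<Rightarrow> nat \<Rightarrow> bool" where
  "e21435 x y z i = (if i = 1 then x else if i = 4 then True else if i = 3 then y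
                     else if i = 5 then z else False)"

text \<open>Pattern 13254 (preorder 1,3,2,5,4): root 1, right child 3 with left child 2
  and right child 5, and 4 the left child of 5. Edge labels 1-1- :
  e(3)=1, e(2)=u, e(5)=1, e(4)=v.\<close>
definition P13254 :: "nat tree" where
  "P13254 = Node Leaf 1 (Node (Node Leaf 2 Leaf) 3 (Node (Node Leaf 4 Leaf) 5 Leaf))"

definition e13254 :: "bool \<Rightarrow> bool \<Rightarrow> nat \<Rightarrow> bool" where
  "e13254 u v i = (if i = 3 then True else if i = 2 then u else if i = 5 then True
                   else if i = 4 then v else False)"

end

theory Submission
  imports Defs
begin

definition badA :: "'a tree \<Rightarrow> bool" where
  "badA t \<longleftrightarrow> (\<exists>l a rl b rr. Node l a (Node rl b rr) \<in> subtrees t \<and> l \<noteq> Leaf \<and> rl \<noteq> Leaf \<and> rr \<noteq> Leaf)"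

definition badB :: "'a tree \<Rightarrow> bool" where
  "badB t \<longleftrightarrow> (\<exists>l a rl b rrl c rrr. Node l a (Node rl b (Node rrl c rrr)) \<in> subtrees t \<and> rl \<noteq> Leaf \<and> rrl \<noteq> Leaf)"

lemma badA_Leaf[simp]: "\<not> badA Leaf" by (simp add: badA_def)
lemma badB_Leaf[simp]: "\<not> badB Leaf" by (simp add: badB_def)

lemma badA_Node: "badA (Node l a r) \<longleftrightarrow> badA l \<or> badA r \<or>
   (l \<noteq> Leaf \<and> (\<exists>rl b rr. r = Node rl b rr \<and> rl \<noteq> Leaf \<and> rr \<noteq> Leaf))"
proof
  assume "badA (Node l a r)"
  then obtain la aa rl b rr where h: "Node la aa (Node rl b rr) \<in> subtrees (Node l a r)"
    and ne: "la \<noteq> Leaf" "rl \<noteq> Leaf" "rr \<noteq> Leaf" unfolding badA_def by blast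
  from h have "(la = l \<and> aa = a \<and> r = Node rl b rr) \<or> Node la aa (Node rl b rr) \<in> subtrees l
     \<or> Node la aa (Node rl b rr) \<in> subtrees r" by auto
  then show "badA l \<or> badA r \<or> (l \<noteq> Leaf \<and> (\<exists>rl b rr. r = Node rl b rr \<and> rl \<noteq> Leaf \<and> rr \<noteq> Leaf))"
    unfolding badA_def using ne by blast
next
  assume "badA l \<or> badA r \<or> (l \<noteq> Leaf \<and> (\<exists>rl b rr. r = Node rl b rr \<and> rl \<noteq> Leaf \<and> rr \<noteq> Leaf))"
  moreover have "subtrees l \<subseteq> subtrees (Node l a r)" "subtrees r \<subseteq> subtrees (Node l a r)"
    "Node l a r \<in> subtrees (Node l a r)" by auto
  ultimately show "badA (Node l a r)" unfolding badA_def by blast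
qed

lemma badB_Node: "badB (Node l a r) \<longleftrightarrow> badB l \<or> badB r \<or>
   (\<exists>rl b rrl c rrr. r = Node rl b (Node rrl c rrr) \<and> rl \<noteq> Leaf \<and> rrl \<noteq> Leaf)"
proof
  assume "badB (Node l a r)"
  then obtain la aa rl b rrl c rrr where h: "Node la aa (Node rl b (Node rrl c rrr)) \<in> subtrees (Node l a r)"
    and ne: "rl \<noteq> Leaf" "rrl \<noteq> Leaf" unfolding badB_def by blast
  from h have "(la = l \<and> aa = a \<and> r = Node rl b (Node rrl c rrr)) \<or> Node la aa (Node rl b (Node rrl c rrr)) \<in> subtrees l
     \<or> Node la aa (Node rl b (Node rrl c rrr)) \<in> subtrees r" by auto
  then show "badB l \<or> badB r \<or> (\<exists>rl b rrl c rrr. r = Node rl b (Node rrl c rrr) \<and> rl \<noteq> Leaf \<and> rrl \<noteq> Leaf)"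
    unfolding badB_def using ne by blast
next
  assume "badB l \<or> badB r \<or> (\<exists>rl b rrl c rrr. r = Node rl b (Node rrl c rrr) \<and> rl \<noteq> Leaf \<and> rrl \<noteq> Leaf)"
  moreover have "subtrees l \<subseteq> subtrees (Node l a r)" "subtrees r \<subseteq> subtrees (Node l a r)"
    "Node l a r \<in> subtrees (Node l a r)" by auto
  ultimately show "badB (Node l a r)" unfolding badB_def by blast
qed

fun rv :: "'a tree \<Rightarrow> 'a tree \<Rightarrow> 'a tree" where
  "rv acc Leaf = acc"
| "rv acc (Node l a r) = rv (Node (rv Leaf l) a acc) r"

definition Phi :: "'a tree \<Rightarrow> 'a tree" where "Phi t = rv Leaf t"

fun spine :: "'a tree \<Rightarrow> ('a tree \<times> 'a) list" where
  "spine Leaf = []"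
| "spine (Node l a r) = (l, a) # spine r"

fun build :: "('a tree \<times> 'a) list \<Rightarrow> 'a tree \<Rightarrow> 'a tree" where
  "build [] b = b"
| "build ((l,a) # xs) b = Node l a (build xs b)"

lemma build_append: "build (xs @ ys) b = build xs (build ys b)"
  by (induction xs arbitrary: b) auto

lemma rv_build: "rv acc t = build (rev (map (\<lambda>(l,a). (Phi l, a)) (spine t))) acc"
  by (induction t arbitrary: acc) (auto simp: build_append Phi_def)

lemma spine_build: "spine (build xs Leaf) = xs"
  by (induction xs) auto

lemma spine_Phi: "spine (Phi t) = rev (map (\<lambda>(l,a). (Phi l, a)) (spine t))"
  by (metis Phi_def rv_build spine_build)

lemma Phi_build: "Phi t = build (rev (map (\<lambda>(l,a). (Phi l, a)) (spine t))) Leaf"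
  unfolding Phi_def[of t] by (rule rv_build)

lemma size_rv: "size (rv acc t) = size acc + size t"
  by (induction acc t rule: rv.induct) auto

lemma size_Phi[simp]: "size (Phi t) = size t" by (simp add: Phi_def size_rv)

lemma Phi_Leaf_iff[simp]: "Phi t = Leaf \<longleftrightarrow> t = Leaf"
  by (metis size_Phi eq_size_0)

lemma map_rv: "map_tree f (rv acc t) = rv (map_tree f acc) (map_tree f t)"
  by (induction acc t rule: rv.induct) auto

lemma map_Phi: "map_tree f (Phi t) = Phi (map_tree f t)"
  by (simp add: Phi_def map_rv)

lemma build_spine: "build (spine t) Leaf = t"
  by (induction t) auto

lemma Phi_Phi: "Phi (Phi t) = t"
proof (induction t rule: measure_induct_rule[of size])
  case (less t)
  have mem: "p \<in> set (spine t) \<Longrightarrow> size (fst p) < size t" for p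
    by (induction t) auto
  have "Phi (Phi t) = build (rev (map (\<lambda>(l,a). (Phi l, a)) (spine (Phi t)))) Leaf"
    by (rule Phi_build)
  also have "\<dots> = build (map (\<lambda>(l,a). (Phi (Phi l), a)) (spine t)) Leaf"
    by (simp add: spine_Phi rev_map case_prod_beta' comp_def)
  also have "map (\<lambda>(l,a). (Phi (Phi l), a)) (spine t) = spine t"
    using less mem by (auto intro!: map_idI)
  finally show ?case by (simp add: build_spine)
qed

fun noadj :: "bool list \<Rightarrow> bool" where
  "noadj (a # b # xs) = (\<not>(a \<and> b) \<and> noadj (b # xs))"
| "noadj _ = True"

lemma noadj_snoc: "noadj (xs @ [a, b]) = (noadj (xs @ [a]) \<and> \<not>(a \<and> b))"
  by (induction xs rule: noadj.induct) auto

lemma noadj_rev: "noadj (rev xs) = noadj xs"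
proof (induction xs rule: noadj.induct)
  case (1 a b xs)
  then show ?case
    using noadj_snoc[of "rev xs" b a] by (simp del: noadj_snoc) (metis append_Cons append_Nil)
qed auto

definition flags :: "'a tree \<Rightarrow> bool list" where
  "flags t = map (\<lambda>p. fst p \<noteq> Leaf) (spine t)"

lemma flags_simps[simp]: "flags Leaf = []" "flags (Node l a r) = (l \<noteq> Leaf) # flags r"
  by (auto simp: flags_def)

lemma flags_Nil[simp]: "flags t = [] \<longleftrightarrow> t = Leaf"
  by (cases t) auto

lemma badA_spine: "badA t \<longleftrightarrow> (\<exists>p\<in>set (spine t). badA (fst p)) \<or> \<not> noadj (butlast (flags t))"
proof (induction t)
  case (Node l a r)
  note IHr = Node.IH(2)
  show ?case
  proof (cases r)
    case Leaf then show ?thesis by (simp add: badA_Node)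
  next
    case (Node rl b rr)
    have 1: "badA (Node l a r) \<longleftrightarrow> badA l \<or> badA r \<or> (l\<noteq>Leaf \<and> rl\<noteq>Leaf \<and> rr\<noteq>Leaf)"
      by (simp add: badA_Node Node)
    have 2: "butlast (flags (Node l a r)) = (l\<noteq>Leaf) # butlast (flags r)" using Node by simp
    have 3: "noadj ((l\<noteq>Leaf) # butlast (flags r)) \<longleftrightarrow> \<not>(l\<noteq>Leaf \<and> rl\<noteq>Leaf \<and> rr\<noteq>Leaf) \<and> noadj (butlast (flags r))"
      using Node by (cases rr) simp_all
    have 4: "set (spine (Node l a r)) = insert (l,a) (set (spine r))" by simp
    show ?thesis unfolding 1 2 3 4 IHr bex_simps(5) fst_conv by argo
  qed
qed simp

lemma badB_spine: "badB t \<longleftrightarrow> (\<exists>p\<in>set (spine t). badB (fst p)) \<or> \<not> noadj (tl (flags t))"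
proof (induction t)
  case (Node l a r)
  note IHr = Node.IH(2)
  show ?case
  proof (cases r)
    case Leaf then show ?thesis by (simp add: badB_Node)
  next
    case (Node rl b rr)
    have 1: "badB (Node l a r) \<longleftrightarrow> badB l \<or> badB r \<or> (rl\<noteq>Leaf \<and> (\<exists>rrl c rrr. rr = Node rrl c rrr \<and> rrl\<noteq>Leaf))"
      unfolding badB_Node Node by blast
    have 2: "tl (flags (Node l a r)) = (rl\<noteq>Leaf) # tl (flags r)" using Node by simp
    have 3: "noadj ((rl\<noteq>Leaf) # tl (flags r)) \<longleftrightarrow> \<not>(rl\<noteq>Leaf \<and> (\<exists>rrl c rrr. rr = Node rrl c rrr \<and> rrl\<noteq>Leaf)) \<and> noadj (tl (flags r))"
      using Node by (cases rr) simp_all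
    have 4: "set (spine (Node l a r)) = insert (l,a) (set (spine r))" by simp
    show ?thesis unfolding 1 2 3 4 IHr bex_simps(5) fst_conv by argo
  qed
qed simp

lemma flags_Phi: "flags (Phi t) = rev (flags t)"
  by (simp add: flags_def spine_Phi rev_map comp_def case_prod_beta')

lemma badB_Phi: "badB (Phi t) \<longleftrightarrow> badA t"
proof (induction t rule: measure_induct_rule[of size])
  case (less t)
  have mem: "p \<in> set (spine t) \<Longrightarrow> size (fst p) < size t" for p
    by (induction t) auto
  have e: "\<forall>p\<in>set (spine t). badB (Phi (fst p)) = badA (fst p)"
    using less mem by blast
  have 1: "(\<exists>p\<in>set (spine (Phi t)). badB (fst p)) \<longleftrightarrow> (\<exists>p\<in>set (spine t). badA (fst p))"
    using e by (force simp: spine_Phi)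
  have 2: "tl (flags (Phi t)) = rev (butlast (flags t))"
    by (simp add: flags_Phi) (metis butlast_rev rev_rev_ident)
  show ?case unfolding badA_spine[of t] badB_spine[of "Phi t"] 1 2 noadj_rev by blast
qed

lemma badA_Phi: "badA (Phi t) \<longleftrightarrow> badB t"
  by (metis badB_Phi Phi_Phi)


fun lab :: "nat \<Rightarrow> 'a tree \<Rightarrow> nat tree" where
  "lab k Leaf = Leaf"
| "lab k (Node l _ r) = Node (lab k l) (k + size l) (lab (k + size l + 1) r)"

lemma upt_split3: "[k..<k + a + 1 + b] = [k..<k+a] @ (k+a) # [k+a+1..<k+a+1+b]"
proof -
  have "[k..<k + a + 1 + b] = [k..<k+a] @ [k+a..<k+a+1+b]"
    by (metis le_add1 upt_add_eq_append add.assoc)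
  also have "[k+a..<k+a+1+b] = (k+a) # [k+a+1..<k+a+1+b]"
    by (simp add: upt_conv_Cons)
  finally show ?thesis .
qed

lemma inorder_lab: "inorder (lab k t) = [k..<k + size t]"
proof (induction t arbitrary: k)
  case (Node l a r)
  show ?case using Node upt_split3[of k "size l" "size r"] by (simp add: add.assoc)
qed simp

lemma size_lab[simp]: "size (lab k t) = size t"
  by (induction t arbitrary: k) auto

lemma lab_id: "inorder t = [k..<k + size t] \<Longrightarrow> lab k t = t"
proof (induction t arbitrary: k)
  case (Node l a r)
  have "inorder l @ a # inorder r = [k..<k+size l] @ (k+size l) # [k+size l+1..<k+size l+1+size r]"
    using Node.prems upt_split3[of k "size l" "size r"] by (simp add: add.assoc)
  moreover have "length (inorder l) = length [k..<k+size l]" by simp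
  ultimately have 1: "inorder l = [k..<k+size l]" and 2: "a = k + size l"
     and 3: "inorder r = [k+size l+1..<k+size l+1+size r]"
    by (auto simp: append_eq_append_conv)
  show ?case using Node.IH(1)[OF 1] Node.IH(2)[of "k+size l+1"] 2 3 by simp
qed simp

lemma lab_shape: "map_tree (\<lambda>_. ()) s = map_tree (\<lambda>_. ()) t \<Longrightarrow> lab k s = lab k t"
proof (induction t arbitrary: s k)
  case Leaf then show ?case by (cases s) auto
next
  case (Node l a r)
  show ?case
  proof (cases s)
    case (Node l' a' r')
    with Node.prems have 1: "map_tree (\<lambda>_. ()) l' = map_tree (\<lambda>_. ()) l"
      and 2: "map_tree (\<lambda>_. ()) r' = map_tree (\<lambda>_. ()) r" by auto
    have "size l' = size l" using 1 by (metis size_map_tree)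
    then show ?thesis using Node Node.IH 1 2 by simp
  qed (use Node.prems in simp)
qed

lemma shape_lab: "map_tree (\<lambda>_. ()) (lab k t) = map_tree (\<lambda>_. ()) t"
  by (induction t arbitrary: k) auto

lemma Leaf_map: "map_tree f t = Leaf \<longleftrightarrow> t = Leaf"
  by (cases t) auto

lemma badA_map: "badA (map_tree f t) = badA t"
proof (induction t)
  case (Node l a r)
  then show ?case
    by (cases r) (auto simp: badA_Node Leaf_map)
qed simp

lemma badB_map: "badB (map_tree f t) = badB t"
proof (induction t)
  case (Node l a r)
  show ?case
  proof (cases r)
    case (Node rl b rr)
    then show ?thesis using Node.IH
      by (cases rr) (auto simp: badB_Node Leaf_map)
  qed (use Node.IH in \<open>simp add: badB_Node\<close>)
qed simp

lemma badA_lab: "badA (lab k t) = badA t"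
  by (metis badA_map shape_lab)

lemma badB_lab: "badB (lab k t) = badB t"
  by (metis badB_map shape_lab)

definition Psi :: "nat tree \<Rightarrow> nat tree" where "Psi t = lab 1 (Phi t)"

lemma trees_size: "T \<in> trees n \<Longrightarrow> size T = n"
  unfolding trees_def by (metis length_inorder length_upt diff_add_inverse2 mem_Collect_eq)

lemma Psi_trees: "T \<in> trees n \<Longrightarrow> Psi T \<in> trees n"
  using trees_size[of T n] by (simp add: Psi_def trees_def inorder_lab)

lemma Psi_Psi: "T \<in> trees n \<Longrightarrow> Psi (Psi T) = T"
proof -
  assume T: "T \<in> trees n"
  have "map_tree (\<lambda>_. ()) (Phi (lab 1 (Phi T))) = map_tree (\<lambda>_. ()) (Phi (Phi T))"
    by (simp add: map_Phi shape_lab)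
  then have "Psi (Psi T) = lab 1 T" unfolding Psi_def Phi_Phi
    by (metis Phi_Phi lab_shape)
  also have "\<dots> = T" using T trees_size[OF T] by (intro lab_id) (simp add: trees_def)
  finally show ?thesis .
qed

lemma badB_Psi: "badB (Psi T) = badA T" by (simp add: Psi_def badB_lab badB_Phi)
lemma badA_Psi: "badA (Psi T) = badB T" by (simp add: Psi_def badA_lab badA_Phi)

lemma card_eq: "card {T \<in> trees n. \<not> badA T} = card {T \<in> trees n. \<not> badB T}"
proof (rule bij_betw_same_card)
  show "bij_betw Psi {T \<in> trees n. \<not> badA T} {T \<in> trees n. \<not> badB T}"
    by (rule bij_betw_byWitness[where f' = Psi])
       (auto simp: Psi_Psi Psi_trees badA_Psi badB_Psi)
qed


lemma self_sub[simp]: "t \<in> subtrees t"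
  by (cases t) auto

lemma sub_child: "Node l a r \<in> subtrees t \<Longrightarrow> l \<in> subtrees t \<and> r \<in> subtrees t"
  by (induction t) auto

lemma dist_subtree: "t \<in> subtrees T \<Longrightarrow> distinct (inorder T) \<Longrightarrow> distinct (inorder t)"
  by (induction T) auto

lemma dist_sub: "distinct (inorder T) \<Longrightarrow> Node l a r \<in> subtrees T \<Longrightarrow> Node l' a r' \<in> subtrees T
   \<Longrightarrow> l = l' \<and> r = r'"
proof (induction T)
  case (Node L c R)
  have d: "distinct (inorder L)" "distinct (inorder R)" "c \<notin> set_tree L" "c \<notin> set_tree R"
    "set_tree L \<inter> set_tree R = {}"
    using Node.prems(1) by (auto simp flip: set_inorder)
  have m1: "a \<in> set_tree L" if "Node x a y \<in> subtrees L" for x y using that in_set_tree_if by metis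
  have m2: "a \<in> set_tree R" if "Node x a y \<in> subtrees R" for x y using that in_set_tree_if by metis
  have A: "(l = L \<and> a = c \<and> r = R) \<or> Node l a r \<in> subtrees L \<or> Node l a r \<in> subtrees R"
    using Node.prems(2) by simp
  have B: "(l' = L \<and> a = c \<and> r' = R) \<or> Node l' a r' \<in> subtrees L \<or> Node l' a r' \<in> subtrees R"
    using Node.prems(3) by simp
  show ?case
  proof (cases "a = c")
    case True
    then have "\<not> Node l a r \<in> subtrees L" "\<not> Node l a r \<in> subtrees R"
      "\<not> Node l' a r' \<in> subtrees L" "\<not> Node l' a r' \<in> subtrees R"
      using d m1 m2 by blast+
    then show ?thesis using A B by blast
  next
    case False
    show ?thesis
    proof (cases "a \<in> set_tree L")
      case True
      then have "\<not> Node l a r \<in> subtrees R" "\<not> Node l' a r' \<in> subtrees R" using d m2 by blast+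
      then have "Node l a r \<in> subtrees L" "Node l' a r' \<in> subtrees L" using A B False by blast+
      then show ?thesis using Node.IH(1) d by blast
    next
      case F2: False
      then have "\<not> Node l a r \<in> subtrees L" "\<not> Node l' a r' \<in> subtrees L" using m1 by blast+
      then have "Node l a r \<in> subtrees R" "Node l' a r' \<in> subtrees R" using A B False by blast+
      then show ?thesis using Node.IH(2) d by blast
    qed
  qed
qed simp

lemma P21435_lc: "is_left_child P21435 i j \<longleftrightarrow> (i = 1 \<and> j = 2 \<or> i = 3 \<and> j = 4)"
  by (auto simp: is_left_child_def P21435_def)
lemma P21435_rc: "is_right_child P21435 i j \<longleftrightarrow> (i = 4 \<and> j = 2 \<or> i = 5 \<and> j = 4)"
  by (auto simp: is_right_child_def P21435_def)
lemma P21435_set: "set_tree P21435 = {1,2,3,4,5}"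
  by (auto simp: P21435_def)
lemma P13254_lc: "is_left_child P13254 i j \<longleftrightarrow> (i = 2 \<and> j = 3 \<or> i = 4 \<and> j = 5)"
  by (auto simp: is_left_child_def P13254_def)
lemma P13254_rc: "is_right_child P13254 i j \<longleftrightarrow> (i = 3 \<and> j = 1 \<or> i = 5 \<and> j = 3)"
  by (auto simp: is_right_child_def P13254_def)
lemma P13254_set: "set_tree P13254 = {1,2,3,4,5}"
  by (auto simp: P13254_def)

lemma lc_inl: "is_left_child T i j \<Longrightarrow> in_left_subtree T i j"
  unfolding is_left_child_def in_left_subtree_def by force
lemma rc_inr: "is_right_child T i j \<Longrightarrow> in_right_subtree T i j"
  unfolding is_right_child_def in_right_subtree_def by force

lemma if_l: "(if e then is_left_child T i j else in_left_subtree T i j) \<Longrightarrow> in_left_subtree T i j"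
  by (cases e) (auto intro: lc_inl)
lemma if_r: "(if e then is_right_child T i j else in_right_subtree T i j) \<Longrightarrow> in_right_subtree T i j"
  by (cases e) (auto intro: rc_inr)

lemma containsA_bad:
  assumes d: "distinct (inorder T)" and c: "contains T P21435 (e21435 x y z)"
  shows "badA T"
proof -
  obtain f where
    L: "\<And>i j. is_left_child P21435 i j \<Longrightarrow>
        (if e21435 x y z i then is_left_child T (f i) (f j) else in_left_subtree T (f i) (f j))" and
    R: "\<And>i j. is_right_child P21435 i j \<Longrightarrow>
        (if e21435 x y z i then is_right_child T (f i) (f j) else in_right_subtree T (f i) (f j))"
    using c unfolding contains_def by blast
  have h12: "in_left_subtree T (f 1) (f 2)" using L[of 1 2] by (intro if_l) (simp add: P21435_lc)
  have h34: "in_left_subtree T (f 3) (f 4)" using L[of 3 4] by (intro if_l) (simp add: P21435_lc)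
  have h54: "in_right_subtree T (f 5) (f 4)" using R[of 5 4] by (intro if_r) (simp add: P21435_rc)
  have h42: "is_right_child T (f 4) (f 2)" using R[of 4 2] by (simp add: P21435_rc e21435_def)
  obtain L0 L' R' where s1: "Node L0 (f 2) (Node L' (f 4) R') \<in> subtrees T"
    using h42 unfolding is_right_child_def by blast
  obtain l r where s2: "Node l (f 2) r \<in> subtrees T" "f 1 \<in> set_tree l"
    using h12 unfolding in_left_subtree_def by blast
  obtain l3 r3 where s3: "Node l3 (f 4) r3 \<in> subtrees T" "f 3 \<in> set_tree l3"
    using h34 unfolding in_left_subtree_def by blast
  obtain l5 r5 where s5: "Node l5 (f 4) r5 \<in> subtrees T" "f 5 \<in> set_tree r5"
    using h54 unfolding in_right_subtree_def by blast
  have s1': "Node L' (f 4) R' \<in> subtrees T" using sub_child[OF s1] by blast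
  have "L0 = l" using dist_sub[OF d s1 s2(1)] by blast
  moreover have "L' = l3" using dist_sub[OF d s1' s3(1)] by blast
  moreover have "R' = r5" using dist_sub[OF d s1' s5(1)] by blast
  ultimately have "L0 \<noteq> Leaf" "L' \<noteq> Leaf" "R' \<noteq> Leaf" using s2 s3 s5 by auto
  then show ?thesis unfolding badA_def using s1 by blast
qed

lemma containsB_bad:
  assumes d: "distinct (inorder T)" and c: "contains T P13254 (e13254 u v)"
  shows "badB T"
proof -
  obtain f where
    L: "\<And>i j. is_left_child P13254 i j \<Longrightarrow>
        (if e13254 u v i then is_left_child T (f i) (f j) else in_left_subtree T (f i) (f j))" and
    R: "\<And>i j. is_right_child P13254 i j \<Longrightarrow>
        (if e13254 u v i then is_right_child T (f i) (f j) else in_right_subtree T (f i) (f j))"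
    using c unfolding contains_def by blast
  have h23: "in_left_subtree T (f 2) (f 3)" using L[of 2 3] by (intro if_l) (simp add: P13254_lc)
  have h45: "in_left_subtree T (f 4) (f 5)" using L[of 4 5] by (intro if_l) (simp add: P13254_lc)
  have h31: "is_right_child T (f 3) (f 1)" using R[of 3 1] by (simp add: P13254_rc e13254_def)
  have h53: "is_right_child T (f 5) (f 3)" using R[of 5 3] by (simp add: P13254_rc e13254_def)
  obtain L0 L' R' where s1: "Node L0 (f 1) (Node L' (f 3) R') \<in> subtrees T"
    using h31 unfolding is_right_child_def by blast
  obtain M M' N' where s3: "Node M (f 3) (Node M' (f 5) N') \<in> subtrees T"
    using h53 unfolding is_right_child_def by blast
  obtain l r where s2: "Node l (f 3) r \<in> subtrees T" "f 2 \<in> set_tree l"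
    using h23 unfolding in_left_subtree_def by blast
  obtain k k' where s4: "Node k (f 5) k' \<in> subtrees T" "f 4 \<in> set_tree k"
    using h45 unfolding in_left_subtree_def by blast
  have s1': "Node L' (f 3) R' \<in> subtrees T" using sub_child[OF s1] by blast
  have s3': "Node M' (f 5) N' \<in> subtrees T" using sub_child[OF s3] by blast
  have e1: "L' = l" using dist_sub[OF d s1' s2(1)] by blast
  have e2: "R' = Node M' (f 5) N'" using dist_sub[OF d s1' s3] by blast
  have e3: "M' = k" using dist_sub[OF d s3' s4(1)] by blast
  have "L' \<noteq> Leaf" "M' \<noteq> Leaf" using e1 e3 s2 s4 by auto
  then show ?thesis unfolding badB_def using s1 e2 by blast
qed

lemma badA_contains:
  assumes d: "distinct (inorder T)" and b: "badA T"
  shows "contains T P21435 e"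
proof -
  obtain l a rl b rr where s: "Node l a (Node rl b rr) \<in> subtrees T" and ne: "l \<noteq> Leaf" "rl \<noteq> Leaf" "rr \<noteq> Leaf"
    using b unfolding badA_def by blast
  obtain l1 c1 l2 where l: "l = Node l1 c1 l2" using ne(1) by (cases l) auto
  obtain m1 c3 m2 where rl: "rl = Node m1 c3 m2" using ne(2) by (cases rl) auto
  obtain n1 c5 n2 where rr: "rr = Node n1 c5 n2" using ne(3) by (cases rr) auto
  define f where "f = (\<lambda>i::nat. if i = 1 then c1 else if i = 2 then a else if i = 3 then c3 else if i = 4 then b else c5)"
  have s': "Node rl b rr \<in> subtrees T" using sub_child[OF s] by blast
  have sl: "l \<in> subtrees T" using sub_child[OF s] by blast
  have srl: "rl \<in> subtrees T" "rr \<in> subtrees T" using sub_child[OF s'] by blast+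
  have dd: "distinct (inorder (Node l a (Node rl b rr)))" using dist_subtree[OF s d] .
  have dd': "a \<notin> set_tree l" "a \<notin> set_tree rl" "a \<notin> set_tree rr" "b \<notin> set_tree l"
    "b \<notin> set_tree rl" "b \<notin> set_tree rr" "a \<noteq> b" "set_tree l \<inter> set_tree rl = {}"
    "set_tree l \<inter> set_tree rr = {}" "set_tree rl \<inter> set_tree rr = {}"
    using dd by (auto simp flip: set_inorder)
  have m: "c1 \<in> set_tree l" "c3 \<in> set_tree rl" "c5 \<in> set_tree rr" using l rl rr by auto
  have neq: "c1 \<noteq> a" "c1 \<noteq> c3" "c1 \<noteq> b" "c1 \<noteq> c5" "a \<noteq> c3" "a \<noteq> b" "a \<noteq> c5"
    "c3 \<noteq> b" "c3 \<noteq> c5" "b \<noteq> c5" using dd' m by blast+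
  have inj: "inj_on f (set_tree P21435)"
    unfolding P21435_set inj_on_def f_def using neq by auto
  have inT: "a \<in> set_tree T" "b \<in> set_tree T" "c1 \<in> set_tree T" "c3 \<in> set_tree T" "c5 \<in> set_tree T"
    using in_set_tree_if[OF s] in_set_tree_if[OF s'] in_set_tree_if[of l1 c1 l2 T] in_set_tree_if[of m1 c3 m2 T]
      in_set_tree_if[of n1 c5 n2 T] sl srl l rl rr by auto
  have img: "f ` set_tree P21435 \<subseteq> set_tree T"
    unfolding P21435_set f_def using inT by auto
  have lc12: "is_left_child T c1 a" "in_left_subtree T c1 a"
    using s l unfolding is_left_child_def in_left_subtree_def by auto
  have lc34: "is_left_child T c3 b" "in_left_subtree T c3 b"
    using s' rl unfolding is_left_child_def in_left_subtree_def by auto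
  have rc42: "is_right_child T b a" using s unfolding is_right_child_def by auto
  have rc42': "in_right_subtree T b a" using s unfolding in_right_subtree_def
    by (intro exI[of _ l] exI[of _ "Node rl b rr"]) simp
  have rc54: "is_right_child T c5 b" using s' rr unfolding is_right_child_def by auto
  have rc54': "in_right_subtree T c5 b" using s' rr unfolding in_right_subtree_def
    by (intro exI[of _ rl] exI[of _ rr]) simp
  show ?thesis unfolding contains_def
    using inj img lc12 lc34 rc42 rc42' rc54 rc54' by (intro exI[of _ f]) (auto simp: P21435_lc P21435_rc f_def)
qed

lemma badB_contains:
  assumes d: "distinct (inorder T)" and b: "badB T"
  shows "contains T P13254 e"
proof -
  obtain l a rl b rrl c rrr where s: "Node l a (Node rl b (Node rrl c rrr)) \<in> subtrees T"
    and ne: "rl \<noteq> Leaf" "rrl \<noteq> Leaf"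
    using b unfolding badB_def by blast
  obtain m1 c2 m2 where rl: "rl = Node m1 c2 m2" using ne(1) by (cases rl) auto
  obtain n1 c4 n2 where rrl: "rrl = Node n1 c4 n2" using ne(2) by (cases rrl) auto
  define f where "f = (\<lambda>i::nat. if i = 1 then a else if i = 2 then c2 else if i = 3 then b else if i = 4 then c4 else c)"
  have s': "Node rl b (Node rrl c rrr) \<in> subtrees T" using sub_child[OF s] by blast
  have s'': "Node rrl c rrr \<in> subtrees T" "rl \<in> subtrees T" using sub_child[OF s'] by blast+
  have s''': "rrl \<in> subtrees T" using sub_child[OF s''(1)] by blast
  have dd: "distinct (inorder (Node l a (Node rl b (Node rrl c rrr))))" using dist_subtree[OF s d] .
  have dd': "a \<notin> set_tree l" "a \<notin> set_tree rl" "a \<notin> set_tree rrl" "a \<notin> set_tree rrr"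
    "b \<notin> set_tree rl" "b \<notin> set_tree rrl" "b \<notin> set_tree rrr" "a \<noteq> b" "a \<noteq> c" "b \<noteq> c"
    "c \<notin> set_tree rl" "c \<notin> set_tree rrl" "set_tree rl \<inter> set_tree rrl = {}"
    using dd by (auto simp flip: set_inorder)
  have m: "c2 \<in> set_tree rl" "c4 \<in> set_tree rrl" using rl rrl by auto
  have neq: "a \<noteq> c2" "a \<noteq> b" "a \<noteq> c4" "a \<noteq> c" "c2 \<noteq> b" "c2 \<noteq> c4" "c2 \<noteq> c"
    "b \<noteq> c4" "b \<noteq> c" "c4 \<noteq> c" using dd' m by blast+
  have inj: "inj_on f (set_tree P13254)"
    unfolding P13254_set inj_on_def f_def using neq by auto
  have inT: "a \<in> set_tree T" "b \<in> set_tree T" "c \<in> set_tree T" "c2 \<in> set_tree T" "c4 \<in> set_tree T"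
    using in_set_tree_if[OF s] in_set_tree_if[OF s'] in_set_tree_if[OF s''(1)] in_set_tree_if[of m1 c2 m2 T]
      in_set_tree_if[of n1 c4 n2 T] s''(2) s''' rl rrl by auto
  have img: "f ` set_tree P13254 \<subseteq> set_tree T"
    unfolding P13254_set f_def using inT by auto
  have lc23: "is_left_child T c2 b" "in_left_subtree T c2 b"
    using s' rl unfolding is_left_child_def in_left_subtree_def by auto
  have lc45: "is_left_child T c4 c" "in_left_subtree T c4 c"
    using s''(1) rrl unfolding is_left_child_def in_left_subtree_def by auto
  have rc31: "is_right_child T b a" using s unfolding is_right_child_def by auto
  have rc31': "in_right_subtree T b a" using s unfolding in_right_subtree_def
    by (intro exI[of _ l] exI[of _ "Node rl b (Node rrl c rrr)"]) simp
  have rc53: "is_right_child T c b" using s' unfolding is_right_child_def by auto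
  have rc53': "in_right_subtree T c b" using s' unfolding in_right_subtree_def
    by (intro exI[of _ rl] exI[of _ "Node rrl c rrr"]) simp
  show ?thesis unfolding contains_def
    using inj img lc23 lc45 rc31 rc31' rc53 rc53' by (intro exI[of _ f]) (auto simp: P13254_lc P13254_rc f_def)
qed

lemma avA: "avoiders n P21435 (e21435 x y z) = {T \<in> trees n. \<not> badA T}"
proof -
  have "contains T P21435 (e21435 x y z) \<longleftrightarrow> badA T" if "T \<in> trees n" for T
  proof -
    have "distinct (inorder T)" using that by (simp add: trees_def)
    then show ?thesis using containsA_bad badA_contains by blast
  qed
  then show ?thesis unfolding avoiders_def by blast
qed

lemma avB: "avoiders n P13254 (e13254 u v) = {T \<in> trees n. \<not> badB T}"
proof -
  have "contains T P13254 (e13254 u v) \<longleftrightarrow> badB T" if "T \<in> trees n" for T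
  proof -
    have "distinct (inorder T)" using that by (simp add: trees_def)
    then show ?thesis using containsB_bad badB_contains by blast
  qed
  then show ?thesis unfolding avoiders_def by blast
qed

theorem lemma22:
  fixes x y z u v :: bool and n :: nat
  shows "card (avoiders n P21435 (e21435 x y z)) = card (avoiders n P13254 (e13254 u v))"
  unfolding avA avB by (rule card_eq)

end
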